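(* Let $\Gamma$ be a finite multiset of formulas and $G$ a formula. If the sequent $\Gamma\longrightarrow G$ has an $\mathbf{I}$-proof in which (1) either no $\lor$-L rule is used, or no $\lor$-R and no $\exists$-R rules are used, and (2) either no $\exists$-L rule or no $\exists$-R rule is used, then $\Gamma\longrightarrow G$ has a uniform proof. Moreover, this characterization is tight: for each of the three combinations $\{\lor\text{-L},\exists\text{-R}\}$, $\{\lor\text{-L},\lor\text{-R}\}$, $\{\exists\text{-L},\exists\text{-R}\}$ there is a sequent with an $\mathbf{I}$-proof in which rules of both kinds in that combination are used, but which has no uniform proof.
   Context: Formulas are first-order formulas built from atomic formulas and the logical constants $\top$, $\bot$ (not counted as atomic) using $\land,\lor,\supset,\forall,\exists$; $\neg A$ abbreviates $A\supset\bot$; $B[t/x]$ is capture-avoiding substitution of term $t$ for free $x$ in $B$. A sequent $\Gamma\longrightarrow\Delta$ is a pair of finite multisets of formulas; $B,\Gamma$ denotes $\Gamma$ with an extra occurrence of $B$. A sequent is an axiom if $\top\in\Delta$ or some formula that is $\bot$ or atomic occurs in both $\Gamma$ and $\Delta$. Writing premises $\Rightarrow$ conclusion, the rules are all instances of: contr-L: $B,B,\Gamma\longrightarrow\Delta\Rightarrow B,\Gamma\longrightarrow\Delta$; contr-R: $\Gamma\longrightarrow\Delta,B,B\Rightarrow\Gamma\longrightarrow\Delta,B$; $\bot$-R: $\Gamma\longrightarrow\Delta,\bot\Rightarrow\Gamma\longrightarrow\Delta,D$; $\land$-L: $B,\Gamma\longrightarrow\Delta\Rightarrow B\land D,\Gamma\longrightarrow\Delta$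 and $D,\Gamma\longrightarrow\Delta\Rightarrow B\land D,\Gamma\longrightarrow\Delta$; $\lor$-L: $B,\Gamma\longrightarrow\Delta$ and $D,\Gamma\longrightarrow\Delta\Rightarrow B\lor D,\Gamma\longrightarrow\Delta$; $\land$-R: $\Gamma\longrightarrow\Delta,B$ and $\Gamma\longrightarrow\Delta,D\Rightarrow\Gamma\longrightarrow\Delta,B\land D$; $\lor$-R: $\Gamma\longrightarrow\Delta,B\Rightarrow\Gamma\longrightarrow\Delta,B\lor D$ and $\Gamma\longrightarrow\Delta,D\Rightarrow\Gamma\longrightarrow\Delta,B\lor D$; $\supset$-L: $\Gamma\longrightarrow\Delta,B$ and $D,\Gamma\longrightarrow\Theta\Rightarrow B\supset D,\Gamma\longrightarrow\Delta,\Theta$; $\supset$-R: $B,\Gamma\longrightarrow\Delta,D\Rightarrow\Gamma\longrightarrow\Delta,B\supset D$; $\forall$-L: $B[t/x],\Gamma\longrightarrow\Delta\Rightarrow\forall x B,\Gamma\longrightarrow\Delta$; $\exists$-R: $\Gamma\longrightarrow\Delta,B[t/x]\Rightarrow\Gamma\longrightarrow\Delta,\exists x B$ ($t$ any term); $\exists$-L: $B[c/x],\Gamma\longrightarrow\Delta\Rightarrow\exists x B,\Gamma\longrightarrow\Delta$; $\forall$-R: $\Gamma\longrightarrow\Delta,B[c/x]\Rightarrow\Gamma\longrightarrow\Delta,\forall x B$, where the constant $c$ does not occur in the conclusion. A $\mathbf{C}$-proof is a finite tree of sequents with axioms at the leaves, each internal node being the conclusion of a rule instance whose premises are its children. An $\mathbf{I}$-proof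 is a $\mathbf{C}$-proof in which every sequent has exactly one formula in its succedent. A uniform proof ($\mathbf{O}$-proof) is an $\mathbf{I}$-proof in which any sequent that has a non-atomic formula distinct from $\bot$ in its succedent occurs only as the conclusion of an inference rule that introduces the top-level logical symbol of that formula. A rule "is used" if some instance of that schema occurs in the proof. *)

theory Defs
  imports Main "HOL-Library.Multiset"
begin

text \<open>Function symbols are identified by a name; a constant is a nullary application.
  Loose de Bruijn indices play the role of free variables.\<close>

datatype trm = Var nat | Fn nat "trm list"

datatype fm =
    Atom nat "trm list"
  | TT
  | FF
  | Conj fm fm
  | Disj fm fm
  | Imp fm fm
  | All fm
  | Ex fm

fun liftt :: "trm \<Rightarrow> nat \<Rightarrow> trm" where
  "liftt (Var i) k = (if i < k then Var i else Var (Suc i))"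
| "liftt (Fn f ts) k = Fn f (map (\<lambda>t. liftt t k) ts)"

fun substt :: "trm \<Rightarrow> trm \<Rightarrow> nat \<Rightarrow> trm" where
  "substt (Var i) s k = (if k < i then Var (i - 1) else if i = k then s else Var i)"
| "substt (Fn f ts) s k = Fn f (map (\<lambda>t. substt t s k) ts)"

fun liftf :: "fm \<Rightarrow> nat \<Rightarrow> fm" where
  "liftf (Atom p ts) k = Atom p (map (\<lambda>t. liftt t k) ts)"
| "liftf TT k = TT"
| "liftf FF k = FF"
| "liftf (Conj A B) k = Conj (liftf A k) (liftf B k)"
| "liftf (Disj A B) k = Disj (liftf A k) (liftf B k)"
| "liftf (Imp A B) k = Imp (liftf A k) (liftf B k)"
| "liftf (All A) k = All (liftf A (Suc k))"
| "liftf (Ex A) k = Ex (liftf A (Suc k))"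

fun substf :: "fm \<Rightarrow> trm \<Rightarrow> nat \<Rightarrow> fm" where
  "substf (Atom p ts) s k = Atom p (map (\<lambda>t. substt t s k) ts)"
| "substf TT s k = TT"
| "substf FF s k = FF"
| "substf (Conj A B) s k = Conj (substf A s k) (substf B s k)"
| "substf (Disj A B) s k = Disj (substf A s k) (substf B s k)"
| "substf (Imp A B) s k = Imp (substf A s k) (substf B s k)"
| "substf (All A) s k = All (substf A (liftt s 0) (Suc k))"
| "substf (Ex A) s k = Ex (substf A (liftt s 0) (Suc k))"

text \<open>B[t/x] where B is the body of a quantifier Qx.B\<close>
definition inst :: "fm \<Rightarrow> trm \<Rightarrow> fm" where
  "inst B t = substf B t 0"

fun symst :: "trm \<Rightarrow> (nat \<times> nat) set" where
  "symst (Var i) = {}"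
| "symst (Fn f ts) = insert (f, length ts) (\<Union>t\<in>set ts. symst t)"

fun symsf :: "fm \<Rightarrow> (nat \<times> nat) set" where
  "symsf (Atom p ts) = (\<Union>t\<in>set ts. symst t)"
| "symsf TT = {}"
| "symsf FF = {}"
| "symsf (Conj A B) = symsf A \<union> symsf B"
| "symsf (Disj A B) = symsf A \<union> symsf B"
| "symsf (Imp A B) = symsf A \<union> symsf B"
| "symsf (All A) = symsf A"
| "symsf (Ex A) = symsf A"

fun atomic :: "fm \<Rightarrow> bool" where
  "atomic (Atom p ts) = True"
| "atomic _ = False"

type_synonym seq = "fm multiset \<times> fm multiset"

definition seq_syms :: "seq \<Rightarrow> (nat \<times> nat) set" where
  "seq_syms S = (\<Union>F\<in>set_mset (fst S). symsf F) \<union> (\<Union>F\<in>set_mset (snd S). symsf F)"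

definition is_axiom :: "seq \<Rightarrow> bool" where
  "is_axiom S \<longleftrightarrow> TT \<in># snd S \<or>
     (\<exists>F. (F = FF \<or> atomic F) \<and> F \<in># fst S \<and> F \<in># snd S)"

datatype rule = ContrL | ContrR | BotR | AndL | OrL | AndR | OrR | ImpL | ImpR
  | AllL | ExR | ExL | AllR

inductive rinst :: "rule \<Rightarrow> seq list \<Rightarrow> seq \<Rightarrow> bool" where
  contrL: "rinst ContrL [(add_mset B (add_mset B \<Gamma>), \<Delta>)] (add_mset B \<Gamma>, \<Delta>)"
| contrR: "rinst ContrR [(\<Gamma>, add_mset B (add_mset B \<Delta>))] (\<Gamma>, add_mset B \<Delta>)"
| botR: "rinst BotR [(\<Gamma>, add_mset FF \<Delta>)] (\<Gamma>, add_mset D \<Delta>)"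
| andL1: "rinst AndL [(add_mset B \<Gamma>, \<Delta>)] (add_mset (Conj B D) \<Gamma>, \<Delta>)"
| andL2: "rinst AndL [(add_mset D \<Gamma>, \<Delta>)] (add_mset (Conj B D) \<Gamma>, \<Delta>)"
| orL: "rinst OrL [(add_mset B \<Gamma>, \<Delta>), (add_mset D \<Gamma>, \<Delta>)] (add_mset (Disj B D) \<Gamma>, \<Delta>)"
| andR: "rinst AndR [(\<Gamma>, add_mset B \<Delta>), (\<Gamma>, add_mset D \<Delta>)] (\<Gamma>, add_mset (Conj B D) \<Delta>)"
| orR1: "rinst OrR [(\<Gamma>, add_mset B \<Delta>)] (\<Gamma>, add_mset (Disj B D) \<Delta>)"
| orR2: "rinst OrR [(\<Gamma>, add_mset D \<Delta>)] (\<Gamma>, add_mset (Disj B D) \<Delta>)"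
| impL: "rinst ImpL [(\<Gamma>, add_mset B \<Delta>), (add_mset D \<Gamma>, \<Theta>)]
           (add_mset (Imp B D) \<Gamma>, \<Delta> + \<Theta>)"
| impR: "rinst ImpR [(add_mset B \<Gamma>, add_mset D \<Delta>)] (\<Gamma>, add_mset (Imp B D) \<Delta>)"
| allL: "rinst AllL [(add_mset (inst B t) \<Gamma>, \<Delta>)] (add_mset (All B) \<Gamma>, \<Delta>)"
| exR: "rinst ExR [(\<Gamma>, add_mset (inst B t) \<Delta>)] (\<Gamma>, add_mset (Ex B) \<Delta>)"
| exL: "(c, 0) \<notin> seq_syms (add_mset (Ex B) \<Gamma>, \<Delta>) \<Longrightarrow>
        rinst ExL [(add_mset (inst B (Fn c [])) \<Gamma>, \<Delta>)] (add_mset (Ex B) \<Gamma>, \<Delta>)"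
| allR: "(c, 0) \<notin> seq_syms (\<Gamma>, add_mset (All B) \<Delta>) \<Longrightarrow>
        rinst AllR [(\<Gamma>, add_mset (inst B (Fn c [])) \<Delta>)] (\<Gamma>, add_mset (All B) \<Delta>)"

datatype ptree = Leaf seq | Node rule "ptree list" seq

fun concl :: "ptree \<Rightarrow> seq" where
  "concl (Leaf S) = S"
| "concl (Node r ps S) = S"

fun c_proof :: "ptree \<Rightarrow> bool" where
  "c_proof (Leaf S) = is_axiom S"
| "c_proof (Node r ps S) = (rinst r (map concl ps) S \<and> (\<forall>p\<in>set ps. c_proof p))"

fun sequents :: "ptree \<Rightarrow> seq set" where
  "sequents (Leaf S) = {S}"
| "sequents (Node r ps S) = insert S (\<Union>p\<in>set ps. sequents p)"

fun rules_used :: "ptree \<Rightarrow> rule set" where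
  "rules_used (Leaf S) = {}"
| "rules_used (Node r ps S) = insert r (\<Union>p\<in>set ps. rules_used p)"

definition i_proof :: "ptree \<Rightarrow> bool" where
  "i_proof p \<longleftrightarrow> c_proof p \<and> (\<forall>S\<in>sequents p. size (snd S) = 1)"

text \<open>The right rule introducing the top-level symbol of a (non-atomic, non-bottom) formula.
  For TT, there is no rule; its introduction is the axiom (leaf) with TT in the succedent.\<close>
fun intro_ok :: "fm \<Rightarrow> ptree \<Rightarrow> bool" where
  "intro_ok (Conj A B) p = (\<exists>ps S. p = Node AndR ps S)"
| "intro_ok (Disj A B) p = (\<exists>ps S. p = Node OrR ps S)"
| "intro_ok (Imp A B) p = (\<exists>ps S. p = Node ImpR ps S)"
| "intro_ok (All A) p = (\<exists>ps S. p = Node AllR ps S)"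
| "intro_ok (Ex A) p = (\<exists>ps S. p = Node ExR ps S)"
| "intro_ok TT p = (\<exists>S. p = Leaf S)"
| "intro_ok FF p = True"
| "intro_ok (Atom q ts) p = True"

fun subtrees :: "ptree \<Rightarrow> ptree set" where
  "subtrees (Leaf S) = {Leaf S}"
| "subtrees (Node r ps S) = insert (Node r ps S) (\<Union>p\<in>set ps. subtrees p)"

definition uniform_proof :: "ptree \<Rightarrow> bool" where
  "uniform_proof p \<longleftrightarrow> i_proof p \<and>
     (\<forall>q\<in>subtrees p. \<forall>F. snd (concl q) = {#F#} \<longrightarrow> intro_ok F q)"

end

theory Submission
  imports Defs
begin

fun rt :: "nat \<Rightarrow> nat \<Rightarrow> trm \<Rightarrow> trm" where
  "rt c d (Var i) = Var i"
| "rt c d (Fn f ts) = (if f = c \<and> ts = [] then Fn d [] else Fn f (map (rt c d) ts))"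

fun rf :: "nat \<Rightarrow> nat \<Rightarrow> fm \<Rightarrow> fm" where
  "rf c d (Atom p ts) = Atom p (map (rt c d) ts)"
| "rf c d TT = TT"
| "rf c d FF = FF"
| "rf c d (Conj A B) = Conj (rf c d A) (rf c d B)"
| "rf c d (Disj A B) = Disj (rf c d A) (rf c d B)"
| "rf c d (Imp A B) = Imp (rf c d A) (rf c d B)"
| "rf c d (All A) = All (rf c d A)"
| "rf c d (Ex A) = Ex (rf c d A)"

lemma rt_liftt: "rt c d (liftt s k) = liftt (rt c d s) k"
  by (induction s k rule: liftt.induct) auto

lemma rt_substt: "rt c d (substt t s k) = substt (rt c d t) (rt c d s) k"
  by (induction t s k rule: substt.induct) auto

lemma rf_substf: "rf c d (substf A s k) = substf (rf c d A) (rt c d s) k"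
  by (induction A arbitrary: s k) (auto simp: rt_substt rt_liftt)

lemma rf_inst: "rf c d (inst B t) = inst (rf c d B) (rt c d t)"
  by (simp add: inst_def rf_substf)

lemma symst_liftt[simp]: "symst (liftt t k) = symst t"
  by (induction t k rule: liftt.induct) auto

lemma symst_substt: "symst (substt t s k) \<subseteq> symst t \<union> symst s"
  by (induction t s k rule: substt.induct) auto

lemma symsf_substf: "symsf (substf A s k) \<subseteq> symsf A \<union> symst s"
proof (induction A arbitrary: s k)
  case (Atom p ts) then show ?case using symst_substt by fastforce
qed (fastforce)+

lemma symsf_inst: "symsf (inst B (Fn e [])) \<subseteq> symsf B \<union> {(e,0)}"
  using symsf_substf[of B "Fn e []" 0] by (simp add: inst_def)

lemma rt_fresh: "(c,0) \<notin> symst t \<Longrightarrow> rt c d t = t"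
  by (induction t) (auto simp: map_idI)

lemma rf_fresh: "(c,0) \<notin> symsf F \<Longrightarrow> rf c d F = F"
  by (induction F) (auto simp: rt_fresh map_idI)

lemma rf_inst_fresh: "(c,0) \<notin> symsf B \<Longrightarrow> rf c d (inst B (Fn c [])) = inst B (Fn d [])"
  by (simp add: rf_inst rf_fresh)

lemma rf_ms_fresh: "(\<forall>F\<in>#\<Gamma>. (c,0) \<notin> symsf F) \<Longrightarrow> image_mset (rf c d) \<Gamma> = \<Gamma>"
  by (induction \<Gamma>) (auto simp: rf_fresh)

lemma atomic_rf[simp]: "atomic (rf c d F) = atomic F"
  by (cases F) auto

lemma rf_FF_iff[simp]: "(rf c d F = FF) = (F = FF)" "(rf c d F = TT) = (F = TT)"
  by (cases F; simp)+

lemma finite_symst[simp]: "finite (symst t)"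
  by (induction t) auto

lemma finite_symsf[simp]: "finite (symsf F)"
  by (induction F) auto

lemma finite_seq_syms[simp]: "finite (seq_syms S)"
  by (simp add: seq_syms_def)

lemma fresh_ex: "finite (X :: (nat \<times> nat) set) \<Longrightarrow> finite (L :: nat set) \<Longrightarrow> \<exists>c. c \<notin> L \<and> (c,0) \<notin> X"
proof -
  assume "finite X" "finite L"
  then have "finite (L \<union> fst ` X)" by simp
  then obtain c where "c \<notin> L \<union> fst ` X" using ex_new_if_finite[OF infinite_UNIV_nat] by blast
  then show ?thesis by force
qed

definition low :: "fm \<Rightarrow> bool" where "low G \<longleftrightarrow> atomic G \<or> G = FF"

inductive der :: "rule set \<Rightarrow> nat \<Rightarrow> fm multiset \<Rightarrow> fm \<Rightarrow> bool" for R where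
  dax: "is_axiom (\<Gamma>, {#G#}) \<Longrightarrow> der R n \<Gamma> G"
| dcontrL: "ContrL \<in> R \<Longrightarrow> der R n (add_mset B (add_mset B \<Gamma>)) G \<Longrightarrow> der R (Suc n) (add_mset B \<Gamma>) G"
| dbotR: "BotR \<in> R \<Longrightarrow> der R n \<Gamma> FF \<Longrightarrow> der R (Suc n) \<Gamma> D"
| dandL1: "AndL \<in> R \<Longrightarrow> der R n (add_mset B \<Gamma>) G \<Longrightarrow> der R (Suc n) (add_mset (Conj B D) \<Gamma>) G"
| dandL2: "AndL \<in> R \<Longrightarrow> der R n (add_mset D \<Gamma>) G \<Longrightarrow> der R (Suc n) (add_mset (Conj B D) \<Gamma>) G"
| dorL: "OrL \<in> R \<Longrightarrow> der R n (add_mset B \<Gamma>) G \<Longrightarrow> der R n (add_mset D \<Gamma>) G \<Longrightarrow> der R (Suc n) (add_mset (Disj B D) \<Gamma>) G"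
| dandR: "AndR \<in> R \<Longrightarrow> der R n \<Gamma> B \<Longrightarrow> der R n \<Gamma> D \<Longrightarrow> der R (Suc n) \<Gamma> (Conj B D)"
| dorR1: "OrR \<in> R \<Longrightarrow> der R n \<Gamma> B \<Longrightarrow> der R (Suc n) \<Gamma> (Disj B D)"
| dorR2: "OrR \<in> R \<Longrightarrow> der R n \<Gamma> D \<Longrightarrow> der R (Suc n) \<Gamma> (Disj B D)"
| dimpL: "ImpL \<in> R \<Longrightarrow> der R n \<Gamma> B \<Longrightarrow> der R n (add_mset D \<Gamma>) G \<Longrightarrow> der R (Suc n) (add_mset (Imp B D) \<Gamma>) G"
| dimpR: "ImpR \<in> R \<Longrightarrow> der R n (add_mset B \<Gamma>) D \<Longrightarrow> der R (Suc n) \<Gamma> (Imp B D)"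
| dallL: "AllL \<in> R \<Longrightarrow> der R n (add_mset (inst B t) \<Gamma>) G \<Longrightarrow> der R (Suc n) (add_mset (All B) \<Gamma>) G"
| dexR: "ExR \<in> R \<Longrightarrow> der R n \<Gamma> (inst B t) \<Longrightarrow> der R (Suc n) \<Gamma> (Ex B)"
| dexL: "ExL \<in> R \<Longrightarrow> finite L \<Longrightarrow> (\<And>c. c \<notin> L \<Longrightarrow> der R n (add_mset (inst B (Fn c [])) \<Gamma>) G)
          \<Longrightarrow> der R (Suc n) (add_mset (Ex B) \<Gamma>) G"
| dallR: "AllR \<in> R \<Longrightarrow> finite L \<Longrightarrow> (\<And>c. c \<notin> L \<Longrightarrow> der R n \<Gamma> (inst B (Fn c [])))
          \<Longrightarrow> der R (Suc n) \<Gamma> (All B)"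

lemma der_mono: "der R n \<Gamma> G \<Longrightarrow> n \<le> m \<Longrightarrow> der R m \<Gamma> G"
proof (induction arbitrary: m rule: der.induct)
  case (dax \<Gamma> G n) then show ?case by (simp add: der.dax)
next
  case (dcontrL n B \<Gamma> G) then obtain k where "m = Suc k" "n \<le> k" by (cases m) auto
  with dcontrL show ?case by (auto intro: der.intros)
next
  case (dbotR n \<Gamma> D) then obtain k where "m = Suc k" "n \<le> k" by (cases m) auto
  with dbotR show ?case by (auto intro: der.intros)
next
  case (dandL1 n B \<Gamma> G D) then obtain k where "m = Suc k" "n \<le> k" by (cases m) auto
  with dandL1 show ?case by (auto intro: der.intros)
next
  case (dandL2 n D \<Gamma> G B) then obtain k where "m = Suc k" "n \<le> k" by (cases m) auto
  with dandL2 show ?case by (auto intro: der.intros)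
next
  case (dorL n B \<Gamma> G D) then obtain k where "m = Suc k" "n \<le> k" by (cases m) auto
  with dorL show ?case by (auto intro: der.intros)
next
  case (dandR n \<Gamma> B D) then obtain k where "m = Suc k" "n \<le> k" by (cases m) auto
  with dandR show ?case by (auto intro: der.intros)
next
  case (dorR1 n \<Gamma> B D) then obtain k where "m = Suc k" "n \<le> k" by (cases m) auto
  with dorR1 show ?case by (auto intro: der.intros)
next
  case (dorR2 n \<Gamma> D B) then obtain k where "m = Suc k" "n \<le> k" by (cases m) auto
  with dorR2 show ?case by (auto intro: der.intros)
next
  case (dimpL n \<Gamma> B D G) then obtain k where "m = Suc k" "n \<le> k" by (cases m) auto
  with dimpL show ?case by (auto intro: der.intros)
next
  case (dimpR n B \<Gamma> D) then obtain k where "m = Suc k" "n \<le> k" by (cases m) auto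
  with dimpR show ?case by (auto intro: der.intros)
next
  case (dallL n B t \<Gamma> G) then obtain k where "m = Suc k" "n \<le> k" by (cases m) auto
  with dallL show ?case by (auto intro: der.intros)
next
  case (dexR n \<Gamma> B t) then obtain k where "m = Suc k" "n \<le> k" by (cases m) auto
  with dexR show ?case by (auto intro: der.intros)
next
  case (dexL L n B \<Gamma> G) then obtain k where "m = Suc k" "n \<le> k" by (cases m) auto
  with dexL show ?case by (auto intro!: der.dexL[where L="L"])
next
  case (dallR L n \<Gamma> B) then obtain k where "m = Suc k" "n \<le> k" by (cases m) auto
  with dallR show ?case by (auto intro!: der.dallR[where L="L"])
qed

lemma is_axiom_rf: "is_axiom (\<Gamma>, {#G#}) \<Longrightarrow> is_axiom (image_mset (rf c d) \<Gamma>, {#rf c d G#})"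
  unfolding is_axiom_def by (auto; metis rf.simps(3) atomic_rf image_eqI)

lemma der_ren: "der R n \<Gamma> G \<Longrightarrow> der R n (image_mset (rf c d) \<Gamma>) (rf c d G)"
proof (induction rule: der.induct)
  case (dax \<Gamma> G n) then show ?case by (intro der.dax is_axiom_rf)
next
  case (dallL n B t \<Gamma> G) then show ?case by (auto intro: der.dallL simp: rf_inst)
next
  case (dexR n \<Gamma> B t) then show ?case by (auto intro: der.dexR simp: rf_inst)
next
  case (dexL L n B \<Gamma> G)
  show ?case
  proof (simp, rule der.dexL[where L="insert c L"])
    fix e assume "e \<notin> insert c L"
    then show "der R n (add_mset (inst (rf c d B) (Fn e [])) (image_mset (rf c d) \<Gamma>)) (rf c d G)"
      using dexL.IH[of e] by (simp add: rf_inst)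
  qed (use dexL in auto)
next
  case (dallR L n \<Gamma> B)
  show ?case
  proof (simp, rule der.dallR[where L="insert c L"])
    fix e assume "e \<notin> insert c L"
    then show "der R n (image_mset (rf c d) \<Gamma>) (inst (rf c d B) (Fn e []))"
      using dallR.IH[of e] by (simp add: rf_inst)
  qed (use dallR in auto)
qed (auto intro: der.intros)

lemma der_weak: "der R n \<Gamma> G \<Longrightarrow> der R n (add_mset A \<Gamma>) G"
proof (induction rule: der.induct)
  case (dax \<Gamma> G n) then show ?case by (intro der.dax) (auto simp: is_axiom_def)
next
  case (dcontrL n B \<Gamma> G) then show ?case
    by (metis add_mset_commute der.dcontrL)
next
  case (dandL1 n B \<Gamma> G D) then show ?case by (metis add_mset_commute der.dandL1)
next
  case (dandL2 n D \<Gamma> G B) then show ?case by (metis add_mset_commute der.dandL2)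
next
  case (dorL n B \<Gamma> G D) then show ?case by (metis add_mset_commute der.dorL)
next
  case (dimpL n \<Gamma> B D G) then show ?case by (metis add_mset_commute der.dimpL)
next
  case (dimpR n B \<Gamma> D) then show ?case by (metis add_mset_commute der.dimpR)
next
  case (dallL n B t \<Gamma> G) then show ?case by (metis add_mset_commute der.dallL)
next
  case (dexL L n B \<Gamma> G) then show ?case
    by (subst add_mset_commute, intro der.dexL[where L="L"]) (auto simp: add_mset_commute)
qed (auto intro: der.intros)


lemma not_ax_compound: "\<not> low G \<Longrightarrow> G \<noteq> TT \<Longrightarrow> \<not> is_axiom (\<Gamma>, {#G#})"
  by (auto simp: is_axiom_def low_def)

lemma inv_conj: "der R n \<Gamma> G \<Longrightarrow> G = Conj A B \<Longrightarrow> der R n \<Gamma> A \<and> der R n \<Gamma> B"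
proof (induction rule: der.induct)
  case (dexL L n D \<Gamma> G) then show ?case by (auto intro!: der.dexL[where L=L])
qed (auto simp: is_axiom_def intro: der.intros der_mono)

lemma inv_imp: "der R n \<Gamma> G \<Longrightarrow> G = Imp A B \<Longrightarrow> der R n (add_mset A \<Gamma>) B"
proof (induction rule: der.induct)
  case (dax \<Gamma> G n) then show ?case by (simp add: is_axiom_def)
next
  case (dbotR n \<Gamma> D) then show ?case by (auto intro: der.intros der_weak)
next
  case (dcontrL n B' \<Gamma> G) then show ?case by (metis add_mset_commute der.dcontrL)
next
  case (dandL1 n B' \<Gamma> G D) then show ?case by (metis add_mset_commute der.dandL1)
next
  case (dandL2 n D \<Gamma> G B') then show ?case by (metis add_mset_commute der.dandL2)
next
  case (dorL n B' \<Gamma> G D) then show ?case by (metis add_mset_commute der.dorL)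
next
  case (dimpL n \<Gamma> B' D G) then show ?case by (metis add_mset_commute der.dimpL der_weak)
next
  case (dimpR n B' \<Gamma> D) then show ?case by (auto intro: der_mono)
next
  case (dallL n B' t \<Gamma> G) then show ?case by (metis add_mset_commute der.dallL)
next
  case (dexL L n B' \<Gamma> G) then show ?case
    by (subst add_mset_commute, intro der.dexL[where L="L"]) (auto simp: add_mset_commute)
qed auto

lemma ren_premise:
  assumes "der R n (add_mset (inst D (Fn c [])) \<Gamma>) G"
    and "(c,0) \<notin> symsf D" "\<forall>F\<in>#\<Gamma>. (c,0) \<notin> symsf F" "(c,0) \<notin> symsf G"
  shows "der R n (add_mset (inst D (Fn e [])) \<Gamma>) G"
  using der_ren[OF assms(1), of c e] assms(2-4) by (simp add: rf_inst_fresh rf_ms_fresh rf_fresh)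

lemma inv_disj: "der R n \<Gamma> G \<Longrightarrow> OrL \<notin> R \<Longrightarrow> G = Disj A B \<Longrightarrow> der R n \<Gamma> A \<or> der R n \<Gamma> B"
proof (induction rule: der.induct)
  case (dexL L n D \<Gamma> G)
  define L' where "L' = L \<union> fst ` (symsf D \<union> (\<Union>F\<in>set_mset \<Gamma>. symsf F) \<union> symsf A \<union> symsf B)"
  have fL': "finite L'" using dexL by (simp add: L'_def)
  obtain c0 where c0: "c0 \<notin> L'" using fresh_ex[OF _ fL', of "{}"] by auto
  have nc: "(c0,0) \<notin> symsf D" "\<forall>F\<in>#\<Gamma>. (c0,0) \<notin> symsf F" "(c0,0) \<notin> symsf A" "(c0,0) \<notin> symsf B"
    using c0 unfolding L'_def by (auto intro: rev_image_eqI)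
  have "c0 \<notin> L" using c0 L'_def by auto
  then have "der R n (add_mset (inst D (Fn c0 [])) \<Gamma>) A \<or> der R n (add_mset (inst D (Fn c0 [])) \<Gamma>) B"
    using dexL by auto
  then show ?case
  proof
    assume h: "der R n (add_mset (inst D (Fn c0 [])) \<Gamma>) A"
    have "der R (Suc n) (add_mset (fm.Ex D) \<Gamma>) A"
      by (rule der.dexL[where L=L']) (use dexL fL' ren_premise[OF h] nc in auto)
    then show ?thesis by simp
  next
    assume h: "der R n (add_mset (inst D (Fn c0 [])) \<Gamma>) B"
    have "der R (Suc n) (add_mset (fm.Ex D) \<Gamma>) B"
      by (rule der.dexL[where L=L']) (use dexL fL' ren_premise[OF h] nc in auto)
    then show ?thesis by simp
  qed
next
  case (dorL n B' \<Gamma> G D) then show ?case by simp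
qed (auto simp: is_axiom_def intro: der.intros der_mono)

lemma inv_ex: "der R n \<Gamma> G \<Longrightarrow> OrL \<notin> R \<Longrightarrow> ExL \<notin> R \<Longrightarrow> G = Ex B \<Longrightarrow> \<exists>t. der R n \<Gamma> (inst B t)"
proof (induction rule: der.induct)
  case (dbotR n \<Gamma> D) then show ?case by (auto intro: der.intros)
next
  case (dexR n \<Gamma> B' t) then show ?case using der_mono[of R n \<Gamma> "inst B t" "Suc n"] by auto
qed (auto simp: is_axiom_def intro: der.intros der_mono)

lemma noright: "der R n \<Gamma> G \<Longrightarrow> ((\<exists>A B. G = Disj A B) \<and> OrR \<notin> R) \<or> ((\<exists>B. G = Ex B) \<and> ExR \<notin> R)
   \<Longrightarrow> der R n \<Gamma> G'"
proof (induction arbitrary: G' rule: der.induct)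
  case (dexL L n D \<Gamma> G) then show ?case by (auto intro!: der.dexL[where L=L])
qed (auto simp: is_axiom_def intro: der.intros)

lemma all_swap: "der R n \<Gamma> (inst B (Fn e [])) \<Longrightarrow> (e,0) \<notin> seq_syms (\<Gamma>, {#All B#}) \<Longrightarrow> der R n \<Gamma> (inst B (Fn c []))"
  using der_ren[of R n \<Gamma> "inst B (Fn e [])" e c] by (simp add: rf_inst_fresh rf_ms_fresh seq_syms_def)

lemma inv_all: "der R n \<Gamma> G \<Longrightarrow> G = All B \<Longrightarrow> (c,0) \<notin> seq_syms (\<Gamma>, {#All B#}) \<Longrightarrow> der R n \<Gamma> (inst B (Fn c []))"
proof (induction arbitrary: c rule: der.induct)
  case (dax \<Gamma> G n) then show ?case by (simp add: is_axiom_def)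
next
  case (dbotR n \<Gamma> D) then show ?case by (auto intro: der.intros)
next
  case (dallR L n \<Gamma> B')
  obtain e where e: "e \<notin> insert c L" "(e,0) \<notin> seq_syms (\<Gamma>, {#All B#})"
    using fresh_ex[of "seq_syms (\<Gamma>, {#All B#})" "insert c L"] dallR by auto
  have "der R n \<Gamma> (inst B (Fn e []))" using dallR e by auto
  from all_swap[OF this e(2)] have "der R n \<Gamma> (inst B (Fn c []))" .
  then show ?case using dallR by (auto intro: der_mono)
next
  case (dallL n Ba t \<Gamma> G)
  obtain e where e: "(e,0) \<notin> seq_syms (add_mset (inst Ba t) (add_mset (All Ba) \<Gamma>), {#All B#})"
    using fresh_ex[OF finite_seq_syms, of "{}"] by auto
  then have "der R n (add_mset (inst Ba t) \<Gamma>) (inst B (Fn e []))" using dallL by (auto simp: seq_syms_def)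
  then have "der R (Suc n) (add_mset (All Ba) \<Gamma>) (inst B (Fn e []))" using dallL by (auto intro: der.dallL)
  from all_swap[OF this] e dallL show ?case by (auto simp: seq_syms_def)
next
  case (dexL L n D \<Gamma> G)
  show ?case
  proof (rule der.dexL[where L="insert c L"])
    fix e assume e: "e \<notin> insert c L"
    have "(c,0) \<notin> symsf (inst D (Fn e []))" using symsf_inst[of D e] e dexL.prems by (auto simp: seq_syms_def)
    then show "der R n (add_mset (inst D (Fn e [])) \<Gamma>) (inst B (Fn c []))"
      using dexL e by (auto simp: seq_syms_def)
  qed (use dexL in auto)
qed (auto simp: seq_syms_def intro: der.intros)


fun fsize :: "fm \<Rightarrow> nat" where
  "fsize (Atom p ts) = 1"
| "fsize TT = 1"
| "fsize FF = 1"
| "fsize (Conj A B) = Suc (fsize A + fsize B)"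
| "fsize (Disj A B) = Suc (fsize A + fsize B)"
| "fsize (Imp A B) = Suc (fsize A + fsize B)"
| "fsize (All A) = Suc (fsize A)"
| "fsize (Ex A) = Suc (fsize A)"

lemma fsize_substf[simp]: "fsize (substf A s k) = fsize A"
  by (induction A arbitrary: s k) auto

lemma fsize_inst[simp]: "fsize (inst A s) = fsize A"
  by (simp add: inst_def)

inductive uder :: "fm multiset \<Rightarrow> fm \<Rightarrow> bool" where
  uax: "is_axiom (\<Gamma>, {#G#}) \<Longrightarrow> uder \<Gamma> G"
| ucontrL: "low G \<Longrightarrow> uder (add_mset B (add_mset B \<Gamma>)) G \<Longrightarrow> uder (add_mset B \<Gamma>) G"
| ubotR: "low D \<Longrightarrow> uder \<Gamma> FF \<Longrightarrow> uder \<Gamma> D"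
| uandL1: "low G \<Longrightarrow> uder (add_mset B \<Gamma>) G \<Longrightarrow> uder (add_mset (Conj B D) \<Gamma>) G"
| uandL2: "low G \<Longrightarrow> uder (add_mset D \<Gamma>) G \<Longrightarrow> uder (add_mset (Conj B D) \<Gamma>) G"
| uorL: "low G \<Longrightarrow> uder (add_mset B \<Gamma>) G \<Longrightarrow> uder (add_mset D \<Gamma>) G \<Longrightarrow> uder (add_mset (Disj B D) \<Gamma>) G"
| uimpL: "low G \<Longrightarrow> uder \<Gamma> B \<Longrightarrow> uder (add_mset D \<Gamma>) G \<Longrightarrow> uder (add_mset (Imp B D) \<Gamma>) G"
| uallL: "low G \<Longrightarrow> uder (add_mset (inst B t) \<Gamma>) G \<Longrightarrow> uder (add_mset (All B) \<Gamma>) G"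
| uexL: "low G \<Longrightarrow> (c, 0) \<notin> seq_syms (add_mset (Ex B) \<Gamma>, {#G#}) \<Longrightarrow>
          uder (add_mset (inst B (Fn c [])) \<Gamma>) G \<Longrightarrow> uder (add_mset (Ex B) \<Gamma>) G"
| uandR: "uder \<Gamma> B \<Longrightarrow> uder \<Gamma> D \<Longrightarrow> uder \<Gamma> (Conj B D)"
| uorR1: "uder \<Gamma> B \<Longrightarrow> uder \<Gamma> (Disj B D)"
| uorR2: "uder \<Gamma> D \<Longrightarrow> uder \<Gamma> (Disj B D)"
| uimpR: "uder (add_mset B \<Gamma>) D \<Longrightarrow> uder \<Gamma> (Imp B D)"
| uexR: "uder \<Gamma> (inst B t) \<Longrightarrow> uder \<Gamma> (Ex B)"
| uallR: "(c, 0) \<notin> seq_syms (\<Gamma>, {#All B#}) \<Longrightarrow> uder \<Gamma> (inst B (Fn c [])) \<Longrightarrow> uder \<Gamma> (All B)"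

lemma main_low:
  assumes H: "\<And>m \<Gamma> G. m < n \<Longrightarrow> der R m \<Gamma> G \<Longrightarrow> uder \<Gamma> G"
    and d: "der R n \<Gamma> G" and lw: "low G"
  shows "uder \<Gamma> G"
  using d
proof cases
  case dax then show ?thesis by (rule uax)
next
  case (dcontrL m B \<Gamma>') then show ?thesis using H lw by (auto intro: ucontrL)
next
  case (dbotR m) then show ?thesis using H lw by (auto intro: ubotR)
next
  case (dandL1 m B \<Gamma>' D) then show ?thesis using H lw by (auto intro: uandL1)
next
  case (dandL2 m D \<Gamma>' B) then show ?thesis using H lw by (auto intro: uandL2)
next
  case (dorL m B \<Gamma>' D) then show ?thesis using H lw by (auto intro: uorL)
next
  case (dimpL m B D \<Gamma>') then show ?thesis using H lw by (auto intro: uimpL)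
next
  case (dallL m B t \<Gamma>') then show ?thesis using H lw by (auto intro: uallL)
next
  case (dexL L m B \<Gamma>')
  obtain c where c: "c \<notin> L" "(c,0) \<notin> seq_syms (add_mset (Ex B) \<Gamma>', {#G#})"
    using fresh_ex[OF finite_seq_syms \<open>finite L\<close>] by blast
  then show ?thesis using dexL H[of m] lw by (auto intro: uexL)
qed (use lw in \<open>auto simp: low_def\<close>)

definition cls :: "rule set \<Rightarrow> bool" where
  "cls R \<longleftrightarrow> (OrL \<notin> R \<and> ExL \<notin> R) \<or> (OrL \<notin> R \<and> ExR \<notin> R) \<or> (OrR \<notin> R \<and> ExR \<notin> R)"

lemma main_step:
  assumes H: "\<And>m \<Gamma> G. m < n \<Longrightarrow> der R m \<Gamma> G \<Longrightarrow> uder \<Gamma> G" and cl: "cls R"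
  shows "der R n \<Gamma> G \<Longrightarrow> uder \<Gamma> G"
proof (induction G arbitrary: \<Gamma> rule: measure_induct_rule[of fsize])
  case (less G)
  show ?case
  proof (cases G)
    case (Atom p ts) then show ?thesis using main_low[OF H less.prems] by (simp add: low_def)
  next
    case TT then show ?thesis by (auto intro: uax simp: is_axiom_def)
  next
    case FF then show ?thesis using main_low[OF H less.prems] by (simp add: low_def)
  next
    case (Conj A B) then show ?thesis using inv_conj[OF less.prems] less.IH by (auto intro: uandR)
  next
    case (Imp A B) then show ?thesis using inv_imp[OF less.prems] less.IH by (auto intro: uimpR)
  next
    case (Disj A B)
    show ?thesis
    proof (cases "OrL \<in> R")
      case False
      then show ?thesis using inv_disj[OF less.prems False Disj] less.IH Disj by (auto intro: uorR1 uorR2)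
    next
      case True
      then have "OrR \<notin> R" using cl by (auto simp: cls_def)
      then have "der R n \<Gamma> A" using noright[OF less.prems] Disj by auto
      then show ?thesis using less.IH Disj by (auto intro: uorR1)
    qed
  next
    case (Ex B)
    show ?thesis
    proof (cases "OrL \<notin> R \<and> ExL \<notin> R")
      case True
      then obtain t where "der R n \<Gamma> (inst B t)" using inv_ex[OF less.prems] Ex by blast
      then have "uder \<Gamma> (inst B t)" using less.IH Ex by auto
      then show ?thesis using Ex by (auto intro: uexR)
    next
      case False
      then have "ExR \<notin> R" using cl by (auto simp: cls_def)
      then have "der R n \<Gamma> (inst B (Var 0))" using noright[OF less.prems] Ex by auto
      then have "uder \<Gamma> (inst B (Var 0))" using less.IH Ex by auto
      then show ?thesis using Ex by (auto intro: uexR)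
    qed
  next
    case (All B)
    obtain c where c: "(c,0) \<notin> seq_syms (\<Gamma>, {#All B#})"
      using fresh_ex[OF finite_seq_syms, of "{}"] by auto
    then have "der R n \<Gamma> (inst B (Fn c []))" using inv_all[OF less.prems All] by blast
    then show ?thesis using less.IH All c by (auto intro: uallR)
  qed
qed

lemma der_uder: "cls R \<Longrightarrow> der R n \<Gamma> G \<Longrightarrow> uder \<Gamma> G"
proof (induction n arbitrary: \<Gamma> G rule: less_induct)
  case (less n \<Gamma> G)
  show ?case by (rule main_step[OF _ less.prems]) (use less.IH less.prems in blast)
qed


lemma concl_in_sequents: "concl p \<in> sequents p"
  by (cases p) auto

lemma sequents_sub: "p \<in> set ps \<Longrightarrow> sequents p \<subseteq> sequents (Node r ps S)"
  by auto

lemma add_mset_single_iff: "(add_mset a M = {#b#}) = (a = b \<and> M = {#})"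
  by (metis add_mset_eq_single single_eq_add_mset)

lemma single_add_mset_iff: "({#b#} = add_mset a M) = (a = b \<and> M = {#})"
  by (metis add_mset_eq_single single_eq_add_mset)

lemma map1: "map concl ps = [x] \<Longrightarrow> \<exists>p1. ps = [p1] \<and> concl p1 = x"
  by (cases ps) auto

lemma map2: "map concl ps = [x, y] \<Longrightarrow> \<exists>p1 p2. ps = [p1, p2] \<and> concl p1 = x \<and> concl p2 = y"
  by (cases ps; cases "tl ps") auto

lemma size1: "size M = 1 \<Longrightarrow> \<exists>G. M = {#G#}"
  by (metis One_nat_def size_1_singleton_mset)

lemma tree_der: "c_proof p \<Longrightarrow> (\<forall>S\<in>sequents p. size (snd S) = 1) \<Longrightarrow> rules_used p \<subseteq> R
   \<Longrightarrow> concl p = (\<Gamma>, {#G#}) \<Longrightarrow> \<exists>n. der R n \<Gamma> G"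
proof (induction p arbitrary: \<Gamma> G)
  case (Leaf S) then show ?case by (auto intro: der.dax)
next
  case (Node r ps S)
  have ri: "rinst r (map concl ps) (\<Gamma>, {#G#})" using Node.prems by auto
  have rR: "r \<in> R" using Node.prems by auto
  have IH: "\<And>p \<Gamma> G. p \<in> set ps \<Longrightarrow> concl p = (\<Gamma>, {#G#}) \<Longrightarrow> \<exists>n. der R n \<Gamma> G"
  proof -
    fix p \<Gamma>' G' assume p: "p \<in> set ps" "concl p = (\<Gamma>', {#G'#})"
    show "\<exists>n. der R n \<Gamma>' G'"
      by (rule Node.IH[OF p(1) _ _ _ p(2)]) (use Node.prems p(1) in auto)
  qed
  have sz: "\<And>p. p \<in> set ps \<Longrightarrow> size (snd (concl p)) = 1"
    using Node.prems(2) concl_in_sequents by fastforce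
  from ri show ?case
  proof cases
    case (contrL B \<Gamma>')
    then obtain p1 where p1: "ps = [p1]" "concl p1 = (add_mset B (add_mset B \<Gamma>'), {#G#})" using map1 by blast
    with IH obtain n where "der R n (add_mset B (add_mset B \<Gamma>')) G" by auto
    then show ?thesis using contrL rR by (auto intro: der.dcontrL)
  next
    case (contrR B \<Delta>)
    then obtain p1 where p1: "ps = [p1]" "concl p1 = (\<Gamma>, add_mset B (add_mset B \<Delta>))" using map1 by blast
    then show ?thesis using sz[of p1] by simp
  next
    case (botR \<Delta> D)
    then obtain p1 where p1: "ps = [p1]" "concl p1 = (\<Gamma>, add_mset FF \<Delta>)" using map1 by blast
    from botR have "\<Delta> = {#}" "D = G" by (simp_all add: single_add_mset_iff)
    with IH p1 obtain n where "der R n \<Gamma> FF" by auto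
    then show ?thesis using botR rR by (auto intro: der.dbotR)
  next
    case (andL1 B \<Gamma>' D)
    then obtain p1 where p1: "ps = [p1]" "concl p1 = (add_mset B \<Gamma>', {#G#})" using map1 by blast
    with IH obtain n where "der R n (add_mset B \<Gamma>') G" by auto
    then show ?thesis using andL1 rR by (auto intro: der.dandL1)
  next
    case (andL2 D \<Gamma>' B)
    then obtain p1 where p1: "ps = [p1]" "concl p1 = (add_mset D \<Gamma>', {#G#})" using map1 by blast
    with IH obtain n where "der R n (add_mset D \<Gamma>') G" by auto
    then show ?thesis using andL2 rR by (auto intro: der.dandL2)
  next
    case (orL B \<Gamma>' D)
    then obtain p1 p2 where p: "ps = [p1, p2]" "concl p1 = (add_mset B \<Gamma>', {#G#})" "concl p2 = (add_mset D \<Gamma>', {#G#})"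
      using map2 by blast
    with IH obtain n1 n2 where "der R n1 (add_mset B \<Gamma>') G" "der R n2 (add_mset D \<Gamma>') G" by force
    then have "der R (max n1 n2) (add_mset B \<Gamma>') G" "der R (max n1 n2) (add_mset D \<Gamma>') G"
      by (auto intro: der_mono)
    then show ?thesis using orL rR by (auto intro: der.dorL)
  next
    case (andR B \<Delta> D)
    then obtain p1 p2 where p: "ps = [p1, p2]" "concl p1 = (\<Gamma>, add_mset B \<Delta>)" "concl p2 = (\<Gamma>, add_mset D \<Delta>)"
      using map2 by blast
    from andR have e: "\<Delta> = {#}" "G = Conj B D" by (simp_all add: single_add_mset_iff)
    with IH p obtain n1 n2 where "der R n1 \<Gamma> B" "der R n2 \<Gamma> D" by force
    then have "der R (max n1 n2) \<Gamma> B" "der R (max n1 n2) \<Gamma> D"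
      by (auto intro: der_mono)
    then show ?thesis using rR e andR by (auto intro: der.dandR)
  next
    case (orR1 B \<Delta> D)
    then obtain p1 where p1: "ps = [p1]" "concl p1 = (\<Gamma>, add_mset B \<Delta>)" using map1 by blast
    from orR1 have e: "\<Delta> = {#}" "G = Disj B D" by (simp_all add: single_add_mset_iff)
    with IH p1 obtain n where "der R n \<Gamma> B" by auto
    then show ?thesis using orR1 rR e by (auto intro: der.dorR1)
  next
    case (orR2 D \<Delta> B)
    then obtain p1 where p1: "ps = [p1]" "concl p1 = (\<Gamma>, add_mset D \<Delta>)" using map1 by blast
    from orR2 have e: "\<Delta> = {#}" "G = Disj B D" by (simp_all add: single_add_mset_iff)
    with IH p1 obtain n where "der R n \<Gamma> D" by auto
    then show ?thesis using orR2 rR e by (auto intro: der.dorR2)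
  next
    case (impL \<Gamma>' B \<Delta> D \<Theta>)
    then obtain p1 p2 where p: "ps = [p1, p2]" "concl p1 = (\<Gamma>', add_mset B \<Delta>)" "concl p2 = (add_mset D \<Gamma>', \<Theta>)"
      using map2 by blast
    have "\<Delta> = {#}" using sz[of p1] p by simp
    with impL have "\<Theta> = {#G#}" by simp
    with IH p \<open>\<Delta> = {#}\<close> obtain n1 n2 where "der R n1 \<Gamma>' B" "der R n2 (add_mset D \<Gamma>') G" by force
    then have "der R (max n1 n2) \<Gamma>' B" "der R (max n1 n2) (add_mset D \<Gamma>') G"
      by (auto intro: der_mono)
    then show ?thesis using impL rR by (auto intro: der.dimpL)
  next
    case (impR B D \<Delta>)
    then obtain p1 where p1: "ps = [p1]" "concl p1 = (add_mset B \<Gamma>, add_mset D \<Delta>)" using map1 by blast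
    from impR have e: "\<Delta> = {#}" "G = Imp B D" by (simp_all add: single_add_mset_iff)
    with IH p1 obtain n where "der R n (add_mset B \<Gamma>) D" by auto
    then show ?thesis using impR rR e by (auto intro: der.dimpR)
  next
    case (allL B t \<Gamma>')
    then obtain p1 where p1: "ps = [p1]" "concl p1 = (add_mset (inst B t) \<Gamma>', {#G#})" using map1 by blast
    with IH obtain n where "der R n (add_mset (inst B t) \<Gamma>') G" by auto
    then show ?thesis using allL rR by (auto intro: der.dallL)
  next
    case (exR B t \<Delta>)
    then obtain p1 where p1: "ps = [p1]" "concl p1 = (\<Gamma>, add_mset (inst B t) \<Delta>)" using map1 by blast
    from exR have e: "\<Delta> = {#}" "G = Ex B" by (simp_all add: single_add_mset_iff)
    with IH p1 obtain n where "der R n \<Gamma> (inst B t)" by auto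
    then show ?thesis using exR rR e by (auto intro: der.dexR)
  next
    case (exL c B \<Gamma>')
    then obtain p1 where p1: "ps = [p1]" "concl p1 = (add_mset (inst B (Fn c [])) \<Gamma>', {#G#})" using map1 by blast
    with IH obtain n where d: "der R n (add_mset (inst B (Fn c [])) \<Gamma>') G" by auto
    have fr: "(c,0) \<notin> symsf B" "\<forall>F\<in>#\<Gamma>'. (c,0) \<notin> symsf F" "(c,0) \<notin> symsf G"
      using exL by (auto simp: seq_syms_def)
    have "der R (Suc n) (add_mset (Ex B) \<Gamma>') G"
      by (rule der.dexL[where L="{}"]) (use rR exL ren_premise[OF d fr] in auto)
    then show ?thesis using exL by auto
  next
    case (allR c B \<Delta>)
    then obtain p1 where p1: "ps = [p1]" "concl p1 = (\<Gamma>, add_mset (inst B (Fn c [])) \<Delta>)" using map1 by blast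
    from allR have e: "\<Delta> = {#}" "G = All B" by (simp_all add: single_add_mset_iff)
    with IH p1 obtain n where d: "der R n \<Gamma> (inst B (Fn c []))" by auto
    have fr: "(c,0) \<notin> seq_syms (\<Gamma>, {#All B#})" using allR e by simp
    have "der R (Suc n) \<Gamma> (All B)"
      by (rule der.dallR[where L="{}"]) (use rR allR all_swap[OF d fr] in auto)
    then show ?thesis using e by auto
  qed
qed

lemma low_intro_ok: "low G \<Longrightarrow> intro_ok G q"
  by (cases G) (auto simp: low_def)

lemma ax_intro_ok: "is_axiom (\<Gamma>, {#G#}) \<Longrightarrow> intro_ok G (Leaf S)"
  by (cases G) (auto simp: is_axiom_def)

lemma uni_leaf: "is_axiom (\<Gamma>, {#G#}) \<Longrightarrow> uniform_proof (Leaf (\<Gamma>, {#G#}))"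
  by (auto simp: uniform_proof_def i_proof_def ax_intro_ok)

lemma uni_node: "rinst r (map concl qs) S \<Longrightarrow> size (snd S) = 1 \<Longrightarrow>
   (\<forall>F. snd S = {#F#} \<longrightarrow> intro_ok F (Node r qs S)) \<Longrightarrow> (\<forall>q\<in>set qs. uniform_proof q) \<Longrightarrow>
   uniform_proof (Node r qs S)"
  unfolding uniform_proof_def i_proof_def by auto

lemma uder_tree: "uder \<Gamma> G \<Longrightarrow> \<exists>q. uniform_proof q \<and> concl q = (\<Gamma>, {#G#})"
proof (induction rule: uder.induct)
  case (uax \<Gamma> G) then show ?case using uni_leaf by fastforce
next
  case (ucontrL G B \<Gamma>)
  then obtain q1 where q: "uniform_proof q1" "concl q1 = (add_mset B (add_mset B \<Gamma>), {#G#})" by blast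
  have "uniform_proof (Node ContrL [q1] (add_mset B \<Gamma>, {#G#}))"
    by (rule uni_node) (use q ucontrL low_intro_ok in \<open>auto intro: rinst.intros\<close>)
  then show ?case by fastforce
next
  case (ubotR D \<Gamma>)
  then obtain q1 where q: "uniform_proof q1" "concl q1 = (\<Gamma>, {#FF#})" by blast
  have "uniform_proof (Node BotR [q1] (\<Gamma>, {#D#}))"
    by (rule uni_node) (use q ubotR low_intro_ok rinst.botR[of \<Gamma> "{#}" D] in auto)
  then show ?case by fastforce
next
  case (uandL1 G B \<Gamma> D)
  then obtain q1 where q: "uniform_proof q1" "concl q1 = (add_mset B \<Gamma>, {#G#})" by blast
  have "uniform_proof (Node AndL [q1] (add_mset (Conj B D) \<Gamma>, {#G#}))"
    by (rule uni_node) (use q uandL1 low_intro_ok in \<open>auto intro: rinst.intros\<close>)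
  then show ?case by fastforce
next
  case (uandL2 G D \<Gamma> B)
  then obtain q1 where q: "uniform_proof q1" "concl q1 = (add_mset D \<Gamma>, {#G#})" by blast
  have "uniform_proof (Node AndL [q1] (add_mset (Conj B D) \<Gamma>, {#G#}))"
    by (rule uni_node) (use q uandL2 low_intro_ok in \<open>auto intro: rinst.intros\<close>)
  then show ?case by fastforce
next
  case (uorL G B \<Gamma> D)
  then obtain q1 q2 where q: "uniform_proof q1" "concl q1 = (add_mset B \<Gamma>, {#G#})"
    "uniform_proof q2" "concl q2 = (add_mset D \<Gamma>, {#G#})" by blast
  have "uniform_proof (Node OrL [q1, q2] (add_mset (Disj B D) \<Gamma>, {#G#}))"
    by (rule uni_node) (use q uorL low_intro_ok in \<open>auto intro: rinst.intros\<close>)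
  then show ?case by fastforce
next
  case (uimpL G \<Gamma> B D)
  then obtain q1 q2 where q: "uniform_proof q1" "concl q1 = (\<Gamma>, {#B#})"
    "uniform_proof q2" "concl q2 = (add_mset D \<Gamma>, {#G#})" by blast
  have "uniform_proof (Node ImpL [q1, q2] (add_mset (Imp B D) \<Gamma>, {#G#}))"
    by (rule uni_node) (use q uimpL low_intro_ok rinst.impL[of \<Gamma> B "{#}" D "{#G#}"] in auto)
  then show ?case by fastforce
next
  case (uallL G B t \<Gamma>)
  then obtain q1 where q: "uniform_proof q1" "concl q1 = (add_mset (inst B t) \<Gamma>, {#G#})" by blast
  have "uniform_proof (Node AllL [q1] (add_mset (All B) \<Gamma>, {#G#}))"
    by (rule uni_node) (use q uallL low_intro_ok in \<open>auto intro: rinst.intros\<close>)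
  then show ?case by fastforce
next
  case (uexL G c B \<Gamma>)
  then obtain q1 where q: "uniform_proof q1" "concl q1 = (add_mset (inst B (Fn c [])) \<Gamma>, {#G#})" by blast
  have "uniform_proof (Node ExL [q1] (add_mset (Ex B) \<Gamma>, {#G#}))"
    by (rule uni_node) (use q uexL low_intro_ok in \<open>auto intro: rinst.intros\<close>)
  then show ?case by fastforce
next
  case (uandR \<Gamma> B D)
  then obtain q1 q2 where q: "uniform_proof q1" "concl q1 = (\<Gamma>, {#B#})"
    "uniform_proof q2" "concl q2 = (\<Gamma>, {#D#})" by blast
  have "uniform_proof (Node AndR [q1, q2] (\<Gamma>, {#Conj B D#}))"
    by (rule uni_node) (use q rinst.andR[of \<Gamma> B "{#}" D] in auto)
  then show ?case by fastforce
next
  case (uorR1 \<Gamma> B D)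
  then obtain q1 where q: "uniform_proof q1" "concl q1 = (\<Gamma>, {#B#})" by blast
  have "uniform_proof (Node OrR [q1] (\<Gamma>, {#Disj B D#}))"
    by (rule uni_node) (use q rinst.orR1[of \<Gamma> B "{#}" D] in auto)
  then show ?case by fastforce
next
  case (uorR2 \<Gamma> D B)
  then obtain q1 where q: "uniform_proof q1" "concl q1 = (\<Gamma>, {#D#})" by blast
  have "uniform_proof (Node OrR [q1] (\<Gamma>, {#Disj B D#}))"
    by (rule uni_node) (use q rinst.orR2[of \<Gamma> D "{#}" B] in auto)
  then show ?case by fastforce
next
  case (uimpR B \<Gamma> D)
  then obtain q1 where q: "uniform_proof q1" "concl q1 = (add_mset B \<Gamma>, {#D#})" by blast
  have "uniform_proof (Node ImpR [q1] (\<Gamma>, {#Imp B D#}))"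
    by (rule uni_node) (use q rinst.impR[of B \<Gamma> D "{#}"] in auto)
  then show ?case by fastforce
next
  case (uexR \<Gamma> B t)
  then obtain q1 where q: "uniform_proof q1" "concl q1 = (\<Gamma>, {#inst B t#})" by blast
  have "uniform_proof (Node ExR [q1] (\<Gamma>, {#Ex B#}))"
    by (rule uni_node) (use q rinst.exR[of \<Gamma> B t "{#}"] in auto)
  then show ?case by fastforce
next
  case (uallR c \<Gamma> B)
  then obtain q1 where q: "uniform_proof q1" "concl q1 = (\<Gamma>, {#inst B (Fn c [])#})" by blast
  have "uniform_proof (Node AllR [q1] (\<Gamma>, {#All B#}))"
    by (rule uni_node) (use q uallR rinst.allR[of c \<Gamma> B "{#}"] in auto)
  then show ?case by fastforce
qed


inductive good :: "fm \<Rightarrow> fm \<Rightarrow> bool" for X where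
  gA: "Atom p ts \<noteq> X \<Longrightarrow> good X (Atom p ts)"
| gD1: "good X L \<Longrightarrow> good X (Disj L R')"
| gD2: "good X R' \<Longrightarrow> good X (Disj L R')"
| gE: "(\<And>c. (c,0) \<notin> symsf X \<Longrightarrow> good X (inst B (Fn c []))) \<Longrightarrow> good X (Ex B)"

fun sh :: "fm \<Rightarrow> bool" where
  "sh (Atom p ts) = True"
| "sh (Disj A B) = (sh A \<or> sh B)"
| "sh (Ex B) = sh B"
| "sh _ = False"

lemma sh_substf[simp]: "sh (substf B t k) = sh B"
  by (induction B arbitrary: t k) auto

lemma good_sh: "good X F \<Longrightarrow> sh F"
proof (induction rule: good.induct)
  case (gE B)
  obtain c where "(c,0) \<notin> symsf X" using fresh_ex[OF finite_symsf, of "{}"] by auto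
  then show ?case using gE by (simp add: inst_def)
qed auto

inductive_cases goodE: "good X FF" "good X (Conj A B)" "good X (Imp A B)" "good X (All A)"
  "good X TT" "good X (Disj A B)" "good X (Ex B)" "good X (Atom p ts)"

definition ginv :: "fm \<Rightarrow> seq \<Rightarrow> bool" where
  "ginv X S \<longleftrightarrow> (\<forall>F\<in>#snd S. F = X \<or> F = FF) \<and>
     (\<forall>F\<in>#fst S. if X \<in># snd S then good X F else sh F)"

lemma no_proof: "c_proof p \<Longrightarrow> atomic X \<Longrightarrow> ginv X (concl p) \<Longrightarrow> False"
proof (induction p)
  case (Leaf S)
  obtain \<Gamma> \<Delta> where S: "S = (\<Gamma>, \<Delta>)" by (cases S)
  have ax: "is_axiom S" using Leaf by simp
  show ?case
  proof (cases "TT \<in># \<Delta>")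
    case True then show ?thesis using Leaf S by (cases X) (auto simp: ginv_def)
  next
    case False
    then obtain F where F: "F = FF \<or> atomic F" "F \<in># \<Gamma>" "F \<in># \<Delta>" using ax S by (auto simp: is_axiom_def)
    have g: "if X \<in># \<Delta> then good X F else sh F" using Leaf S F by (auto simp: ginv_def)
    show ?thesis
    proof (cases "F = FF")
      case True then show ?thesis using g by (auto elim: goodE split: if_splits)
    next
      case False
      then have "F = X" using Leaf S F by (auto simp: ginv_def)
      then show ?thesis using g F False by (cases F) (auto elim: goodE)
    qed
  qed
next
  case (Node r ps S)
  have ri: "rinst r (map concl ps) S" using Node by simp
  have IH: "\<And>p. p \<in> set ps \<Longrightarrow> ginv X (concl p) \<Longrightarrow> False" using Node by auto
  have iv: "ginv X S" using Node by simp
  have notc: "\<And>F. F \<in># snd S \<Longrightarrow> \<not> atomic F \<Longrightarrow> F \<noteq> FF \<Longrightarrow> False"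
    using iv Node.prems(2) by (auto simp: ginv_def)
  have XF: "X \<noteq> FF" using Node.prems(2) by auto
  from ri show False
  proof cases
    case (contrL B \<Gamma> \<Delta>)
    then obtain p1 where "ps = [p1]" "concl p1 = (add_mset B (add_mset B \<Gamma>), \<Delta>)" using map1 by blast
    then show False using IH[of p1] iv contrL by (auto simp: ginv_def)
  next
    case (contrR \<Gamma> B \<Delta>)
    then obtain p1 where "ps = [p1]" "concl p1 = (\<Gamma>, add_mset B (add_mset B \<Delta>))" using map1 by blast
    then show False using IH[of p1] iv contrR by (auto simp: ginv_def)
  next
    case (botR \<Gamma> \<Delta> D)
    then obtain p1 where p1: "ps = [p1]" "concl p1 = (\<Gamma>, add_mset FF \<Delta>)" using map1 by blast
    have "ginv X (concl p1)" using p1 iv botR XF unfolding ginv_def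
      by (auto intro: good_sh split: if_splits)
    then show False using IH[of p1] p1 by auto
  next
    case (andL1 B \<Gamma> \<Delta> D) then show False using iv by (auto simp: ginv_def elim: goodE split: if_splits)
  next
    case (andL2 D \<Gamma> \<Delta> B) then show False using iv by (auto simp: ginv_def elim: goodE split: if_splits)
  next
    case (orL B \<Gamma> \<Delta> D)
    then obtain p1 p2 where p: "ps = [p1, p2]" "concl p1 = (add_mset B \<Gamma>, \<Delta>)" "concl p2 = (add_mset D \<Gamma>, \<Delta>)"
      using map2 by blast
    have "if X \<in># \<Delta> then good X (Disj B D) else sh (Disj B D)" using iv orL by (auto simp: ginv_def)
    then have "(if X \<in># \<Delta> then good X B else sh B) \<or> (if X \<in># \<Delta> then good X D else sh D)"
      by (auto elim: goodE split: if_splits)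
    then show False
    proof
      assume "if X \<in># \<Delta> then good X B else sh B"
      then have "ginv X (concl p1)" using p iv orL by (auto simp: ginv_def)
      then show False using IH[of p1] p by auto
    next
      assume "if X \<in># \<Delta> then good X D else sh D"
      then have "ginv X (concl p2)" using p iv orL by (auto simp: ginv_def)
      then show False using IH[of p2] p by auto
    qed
  next
    case (andR \<Gamma> B \<Delta> D) then show False using notc[of "Conj B D"] andR by auto
  next
    case (orR1 \<Gamma> B \<Delta> D) then show False using notc[of "Disj B D"] orR1 by auto
  next
    case (orR2 \<Gamma> D \<Delta> B) then show False using notc[of "Disj B D"] orR2 by auto
  next
    case (impL \<Gamma> B \<Delta> D \<Theta>) then show False using iv by (auto simp: ginv_def elim: goodE split: if_splits)
  next
    case (impR B \<Gamma> D \<Delta>) then show False using notc[of "Imp B D"] impR by auto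
  next
    case (allL B t \<Gamma> \<Delta>) then show False using iv by (auto simp: ginv_def elim: goodE split: if_splits)
  next
    case (exR \<Gamma> B t \<Delta>) then show False using notc[of "Ex B"] exR by auto
  next
    case (exL c B \<Gamma> \<Delta>)
    then obtain p1 where p1: "ps = [p1]" "concl p1 = (add_mset (inst B (Fn c [])) \<Gamma>, \<Delta>)" using map1 by blast
    have g: "if X \<in># \<Delta> then good X (Ex B) else sh (Ex B)" using iv exL by (auto simp: ginv_def)
    have "X \<in># \<Delta> \<longrightarrow> (c,0) \<notin> symsf X" using exL by (auto simp: seq_syms_def)
    then have "if X \<in># \<Delta> then good X (inst B (Fn c [])) else sh (inst B (Fn c []))"
      using g by (auto elim: goodE simp: inst_def split: if_splits)
    then have "ginv X (concl p1)" using p1 iv exL by (auto simp: ginv_def)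
    then show False using IH p1 by auto
  next
    case (allR c \<Gamma> B \<Delta>) then show False using notc[of "All B"] allR by auto
  qed
qed

lemma uni_root: "uniform_proof q \<Longrightarrow> concl q = (\<Gamma>, {#F#}) \<Longrightarrow> intro_ok F q \<and> c_proof q"
proof -
  assume u: "uniform_proof q" and c: "concl q = (\<Gamma>, {#F#})"
  have "q \<in> subtrees q" by (cases q) auto
  then show ?thesis using u c by (auto simp: uniform_proof_def i_proof_def)
qed

lemma no_uniform_Disj:
  assumes "\<And>t. t \<in> {B, D} \<Longrightarrow> \<exists>p. c_proof p \<and> concl p = (\<Gamma>, {#t#}) \<Longrightarrow> False"
  shows "\<not> (\<exists>q. uniform_proof q \<and> concl q = (\<Gamma>, {#Disj B D#}))"
proof
  assume "\<exists>q. uniform_proof q \<and> concl q = (\<Gamma>, {#Disj B D#})"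
  then obtain q where q: "uniform_proof q" "concl q = (\<Gamma>, {#Disj B D#})" by blast
  from uni_root[OF q] obtain ps where qq: "q = Node OrR ps (\<Gamma>, {#Disj B D#})" "c_proof q"
    using q(2) by auto
  then have ri: "rinst OrR (map concl ps) (\<Gamma>, {#Disj B D#})" and cp: "\<forall>p\<in>set ps. c_proof p" by auto
  from ri show False
  proof cases
    case (orR1 B' \<Delta> D')
    then obtain p1 where "ps = [p1]" "concl p1 = (\<Gamma>, add_mset B' \<Delta>)" using map1 by blast
    moreover have "B' = B" "\<Delta> = {#}" using orR1 by (simp_all add: single_add_mset_iff)
    ultimately show False using assms[of B] cp by auto
  next
    case (orR2 D' \<Delta> B')
    then obtain p1 where "ps = [p1]" "concl p1 = (\<Gamma>, add_mset D' \<Delta>)" using map1 by blast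
    moreover have "D' = D" "\<Delta> = {#}" using orR2 by (simp_all add: single_add_mset_iff)
    ultimately show False using assms[of D] cp by auto
  qed
qed

lemma no_uniform_Ex:
  assumes "\<And>t. \<exists>p. c_proof p \<and> concl p = (\<Gamma>, {#inst B t#}) \<Longrightarrow> False"
  shows "\<not> (\<exists>q. uniform_proof q \<and> concl q = (\<Gamma>, {#Ex B#}))"
proof
  assume "\<exists>q. uniform_proof q \<and> concl q = (\<Gamma>, {#Ex B#})"
  then obtain q where q: "uniform_proof q" "concl q = (\<Gamma>, {#Ex B#})" by blast
  from uni_root[OF q] obtain ps where qq: "q = Node ExR ps (\<Gamma>, {#Ex B#})" "c_proof q"
    using q(2) by auto
  then have ri: "rinst ExR (map concl ps) (\<Gamma>, {#Ex B#})" and cp: "\<forall>p\<in>set ps. c_proof p" by auto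
  from ri show False
  proof cases
    case (exR B' t \<Delta>)
    then obtain p1 where "ps = [p1]" "concl p1 = (\<Gamma>, add_mset (inst B' t) \<Delta>)" using map1 by blast
    moreover have "B' = B" "\<Delta> = {#}" using exR by (simp_all add: single_add_mset_iff)
    ultimately show False using assms[of t] cp by auto
  qed
qed

abbreviation "P0 \<equiv> Atom 0 [Var 0]"

lemma inst_P0[simp]: "inst P0 t = Atom 0 [t]"
  by (simp add: inst_def)

lemma ce1: "\<exists>S p. i_proof p \<and> concl p = S \<and> OrL \<in> rules_used p \<and> ExR \<in> rules_used p \<and>
                \<not> (\<exists>q. uniform_proof q \<and> concl q = S)"
proof -
  define a where "a = Atom 0 [Fn 0 []]"
  define b where "b = Atom 0 [Fn 1 []]"
  define S where "S = ({#Disj a b#}, {#Ex P0#})"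
  define p where "p = Node OrL [Node ExR [Leaf ({#a#},{#a#})] ({#a#}, {#Ex P0#}),
                               Node ExR [Leaf ({#b#},{#b#})] ({#b#}, {#Ex P0#})] S"
  have r1: "rinst ExR [({#a#},{#a#})] ({#a#}, {#Ex P0#})"
    using rinst.exR[of "{#a#}" P0 "Fn 0 []" "{#}"] by (simp add: a_def)
  have r2: "rinst ExR [({#b#},{#b#})] ({#b#}, {#Ex P0#})"
    using rinst.exR[of "{#b#}" P0 "Fn 1 []" "{#}"] by (simp add: b_def)
  have r3: "rinst OrL [({#a#}, {#Ex P0#}), ({#b#}, {#Ex P0#})] S"
    using rinst.orL[of a "{#}" "{#Ex P0#}" b] by (simp add: S_def)
  have ip: "i_proof p" using r1 r2 r3
    by (simp add: p_def i_proof_def S_def is_axiom_def a_def b_def)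
  have nu: "\<not> (\<exists>q. uniform_proof q \<and> concl q = S)"
    unfolding S_def
  proof (rule no_uniform_Ex)
    fix t assume "\<exists>p. c_proof p \<and> concl p = ({#Disj a b#}, {#inst P0 t#})"
    then obtain p where p: "c_proof p" "concl p = ({#Disj a b#}, {#Atom 0 [t]#})" by auto
    have "good (Atom 0 [t]) (Disj a b)"
      by (cases "t = Fn 0 []") (auto intro: good.intros simp: a_def b_def)
    then have "ginv (Atom 0 [t]) (concl p)" using p by (simp add: ginv_def)
    then show False using no_proof[OF p(1), of "Atom 0 [t]"] by simp
  qed
  have "concl p = S" "OrL \<in> rules_used p" "ExR \<in> rules_used p" by (simp_all add: p_def)
  then show ?thesis using ip nu by blast
qed

lemma ce2: "\<exists>S p. i_proof p \<and> concl p = S \<and> OrL \<in> rules_used p \<and> OrR \<in> rules_used p \<and>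
                \<not> (\<exists>q. uniform_proof q \<and> concl q = S)"
proof -
  define a where "a = Atom 0 []"
  define b where "b = Atom 1 []"
  define S where "S = ({#Disj a b#}, {#Disj b a#})"
  define p where "p = Node OrL [Node OrR [Leaf ({#a#},{#a#})] ({#a#}, {#Disj b a#}),
                               Node OrR [Leaf ({#b#},{#b#})] ({#b#}, {#Disj b a#})] S"
  have r1: "rinst OrR [({#a#},{#a#})] ({#a#}, {#Disj b a#})"
    using rinst.orR2[of "{#a#}" a "{#}" b] by simp
  have r2: "rinst OrR [({#b#},{#b#})] ({#b#}, {#Disj b a#})"
    using rinst.orR1[of "{#b#}" b "{#}" a] by simp
  have r3: "rinst OrL [({#a#}, {#Disj b a#}), ({#b#}, {#Disj b a#})] S"
    using rinst.orL[of a "{#}" "{#Disj b a#}" b] by (simp add: S_def)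
  have ip: "i_proof p" using r1 r2 r3
    by (simp add: p_def i_proof_def S_def is_axiom_def a_def b_def)
  have nu: "\<not> (\<exists>q. uniform_proof q \<and> concl q = S)"
    unfolding S_def
  proof (rule no_uniform_Disj)
    fix t assume t: "t \<in> {b, a}" and "\<exists>p. c_proof p \<and> concl p = ({#Disj a b#}, {#t#})"
    then obtain p where p: "c_proof p" "concl p = ({#Disj a b#}, {#t#})" by auto
    have "good t (Disj a b)"
      using t by (auto intro: good.intros simp: a_def b_def)
    then have "ginv t (concl p)" using p by (simp add: ginv_def)
    moreover have "atomic t" using t by (auto simp: a_def b_def)
    ultimately show False using no_proof[OF p(1), of t] by simp
  qed
  have "concl p = S" "OrL \<in> rules_used p" "OrR \<in> rules_used p" by (simp_all add: p_def)
  then show ?thesis using ip nu by blast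
qed

lemma ce3: "\<exists>S p. i_proof p \<and> concl p = S \<and> ExL \<in> rules_used p \<and> ExR \<in> rules_used p \<and>
                \<not> (\<exists>q. uniform_proof q \<and> concl q = S)"
proof -
  define a where "a = Atom 0 [Fn 0 []]"
  define S where "S = ({#Ex P0#}, {#Ex P0#})"
  define p where "p = Node ExL [Node ExR [Leaf ({#a#},{#a#})] ({#a#}, {#Ex P0#})] S"
  have r1: "rinst ExR [({#a#},{#a#})] ({#a#}, {#Ex P0#})"
    using rinst.exR[of "{#a#}" P0 "Fn 0 []" "{#}"] by (simp add: a_def)
  have r2: "rinst ExL [({#a#}, {#Ex P0#})] S"
    using rinst.exL[of 0 P0 "{#}" "{#Ex P0#}"] by (simp add: S_def a_def seq_syms_def)
  have ip: "i_proof p" using r1 r2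
    by (simp add: p_def i_proof_def S_def is_axiom_def a_def)
  have nu: "\<not> (\<exists>q. uniform_proof q \<and> concl q = S)"
    unfolding S_def
  proof (rule no_uniform_Ex)
    fix t assume "\<exists>p. c_proof p \<and> concl p = ({#Ex P0#}, {#inst P0 t#})"
    then obtain p where p: "c_proof p" "concl p = ({#Ex P0#}, {#Atom 0 [t]#})" by auto
    have "good (Atom 0 [t]) (Ex P0)"
    proof (rule gE)
      fix c assume "(c, 0) \<notin> symsf (Atom 0 [t])"
      then have "t \<noteq> Fn c []" by auto
      then show "good (Atom 0 [t]) (inst P0 (Fn c []))" by (auto intro: gA)
    qed
    then have "ginv (Atom 0 [t]) (concl p)" using p by (simp add: ginv_def)
    then show False using no_proof[OF p(1), of "Atom 0 [t]"] by simp
  qed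
  have "concl p = S" "ExL \<in> rules_used p" "ExR \<in> rules_used p" by (simp_all add: p_def)
  then show ?thesis using ip nu by blast
qed

theorem theorem8:
  shows "(\<forall>(\<Gamma> :: fm multiset) (G :: fm) p.
            i_proof p \<and> concl p = (\<Gamma>, {#G#}) \<and>
            (OrL \<notin> rules_used p \<or> (OrR \<notin> rules_used p \<and> ExR \<notin> rules_used p)) \<and>
            (ExL \<notin> rules_used p \<or> ExR \<notin> rules_used p)
          \<longrightarrow> (\<exists>q. uniform_proof q \<and> concl q = (\<Gamma>, {#G#})))
       \<and> (\<exists>S p. i_proof p \<and> concl p = S \<and> OrL \<in> rules_used p \<and> ExR \<in> rules_used p \<and>
                \<not> (\<exists>q. uniform_proof q \<and> concl q = S))
       \<and> (\<exists>S p. i_proof p \<and> concl p = S \<and> OrL \<in> rules_used p \<and> OrR \<in> rules_used p \<and>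
                \<not> (\<exists>q. uniform_proof q \<and> concl q = S))
       \<and> (\<exists>S p. i_proof p \<and> concl p = S \<and> ExL \<in> rules_used p \<and> ExR \<in> rules_used p \<and>
                \<not> (\<exists>q. uniform_proof q \<and> concl q = S))"
proof (intro conjI ce1 ce2 ce3 allI impI)
  fix \<Gamma> G p
  assume h: "i_proof p \<and> concl p = (\<Gamma>, {#G#}) \<and>
            (OrL \<notin> rules_used p \<or> (OrR \<notin> rules_used p \<and> ExR \<notin> rules_used p)) \<and>
            (ExL \<notin> rules_used p \<or> ExR \<notin> rules_used p)"
  have cl: "cls (rules_used p)" using h by (auto simp: cls_def)
  obtain n where "der (rules_used p) n \<Gamma> G"
    using tree_der[of p "rules_used p" \<Gamma> G] h by (auto simp: i_proof_def)
  then have "uder \<Gamma> G" using der_uder[OF cl] by blast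
  then show "\<exists>q. uniform_proof q \<and> concl q = (\<Gamma>, {#G#})" by (rule uder_tree)
qed

end
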